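(* Let $G$ be a graph with at least one isolated vertex such that $G\ne\widetilde G$. If $G$ has a minimum twin cover that is also a determining set for $G$, then for every $t\ge1$, \[\det(\mu_t(G))=(t+1)\det(G)+t-1.\]
   Context: All graphs are finite and simple. For a graph $G$ with $V(G)=\{v_1,\dots,v_n\}$ and an integer $t\ge1$, the generalized Mycielskian $\mu_t(G)$ has vertex set $\{u_i^s: 1\le i\le n,\ 0\le s\le t\}\cup\{w\}$, where $u_i^0$ is identified with $v_i$. Its edges are: $u_i^0u_j^0$ for each edge $v_iv_j$ of $G$; $u_i^su_j^{s+1}$ and $u_j^su_i^{s+1}$ for each edge $v_iv_j$ of $G$ and each $0\le s<t$; and $u_i^tw$ for all $1\le i\le n$. A set $S\subseteq V(G)$ is a determining set for $G$ if the only automorphism of $G$ fixing every vertex of $S$ is the identity; $\det(G)$ is the minimum size of a determining set. Two vertices are twins if they have the same open neighborhood; being twins is an equivalence relation on $V(G)$, and the twin quotient $\widetilde G$ has the equivalence classes as vertices, with two classes adjacent iff some members are adjacent in $G$ ($G\ne\widetilde G$ means $G$ has a pair of distinct twins). A minimum twin cover is a minimum-size vertex subset containing at least one vertex from every pair of distinct twins. *)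

theory Defs
  imports Main
begin

definition graph :: "'a set \<Rightarrow> ('a \<Rightarrow> 'a \<Rightarrow> bool) \<Rightarrow> bool" where
  "graph V E \<longleftrightarrow> finite V \<and> (\<forall>x y. E x y \<longrightarrow> x \<in> V \<and> y \<in> V)
     \<and> (\<forall>x y. E x y \<longrightarrow> E y x) \<and> (\<forall>x. \<not> E x x)"

definition automorphism :: "'a set \<Rightarrow> ('a \<Rightarrow> 'a \<Rightarrow> bool) \<Rightarrow> ('a \<Rightarrow> 'a) \<Rightarrow> bool" where
  "automorphism V E f \<longleftrightarrow> bij_betw f V V \<and> (\<forall>x\<in>V. \<forall>y\<in>V. E (f x) (f y) \<longleftrightarrow> E x y)"

definition determining_set :: "'a set \<Rightarrow> ('a \<Rightarrow> 'a \<Rightarrow> bool) \<Rightarrow> 'a set \<Rightarrow> bool" where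
  "determining_set V E S \<longleftrightarrow> S \<subseteq> V \<and>
     (\<forall>f. automorphism V E f \<and> (\<forall>x\<in>S. f x = x) \<longrightarrow> (\<forall>x\<in>V. f x = x))"

definition det_num :: "'a set \<Rightarrow> ('a \<Rightarrow> 'a \<Rightarrow> bool) \<Rightarrow> nat" where
  "det_num V E = Min {card S | S. determining_set V E S}"

definition open_nbhd :: "'a set \<Rightarrow> ('a \<Rightarrow> 'a \<Rightarrow> bool) \<Rightarrow> 'a \<Rightarrow> 'a set" where
  "open_nbhd V E v = {x \<in> V. E v x}"

definition twins :: "'a set \<Rightarrow> ('a \<Rightarrow> 'a \<Rightarrow> bool) \<Rightarrow> 'a \<Rightarrow> 'a \<Rightarrow> bool" where
  "twins V E u v \<longleftrightarrow> u \<in> V \<and> v \<in> V \<and> open_nbhd V E u = open_nbhd V E v"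

text \<open>G differs from its twin quotient iff it has a pair of distinct twins.\<close>
definition has_distinct_twins :: "'a set \<Rightarrow> ('a \<Rightarrow> 'a \<Rightarrow> bool) \<Rightarrow> bool" where
  "has_distinct_twins V E \<longleftrightarrow> (\<exists>u v. u \<noteq> v \<and> twins V E u v)"

definition twin_cover :: "'a set \<Rightarrow> ('a \<Rightarrow> 'a \<Rightarrow> bool) \<Rightarrow> 'a set \<Rightarrow> bool" where
  "twin_cover V E S \<longleftrightarrow> S \<subseteq> V \<and>
     (\<forall>u v. u \<noteq> v \<and> twins V E u v \<longrightarrow> u \<in> S \<or> v \<in> S)"

definition min_twin_cover :: "'a set \<Rightarrow> ('a \<Rightarrow> 'a \<Rightarrow> bool) \<Rightarrow> 'a set \<Rightarrow> bool" where
  "min_twin_cover V E S \<longleftrightarrow> twin_cover V E S \<and>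
     (\<forall>T. twin_cover V E T \<longrightarrow> card S \<le> card T)"

definition isolated :: "'a set \<Rightarrow> ('a \<Rightarrow> 'a \<Rightarrow> bool) \<Rightarrow> 'a \<Rightarrow> bool" where
  "isolated V E v \<longleftrightarrow> v \<in> V \<and> (\<forall>u\<in>V. \<not> E v u)"

text \<open>Generalized Mycielskian: vertex Some (v,s) is u_v^s (0 \<le> s \<le> t), None is w.\<close>
definition myc_V :: "'a set \<Rightarrow> nat \<Rightarrow> ('a \<times> nat) option set" where
  "myc_V V t = {Some (v, s) | v s. v \<in> V \<and> s \<le> t} \<union> {None}"

definition myc_E :: "'a set \<Rightarrow> ('a \<Rightarrow> 'a \<Rightarrow> bool) \<Rightarrow> nat
    \<Rightarrow> ('a \<times> nat) option \<Rightarrow> ('a \<times> nat) option \<Rightarrow> bool" where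
  "myc_E V E t x y = (case (x, y) of
      (Some (u, s), Some (v, r)) \<Rightarrow> u \<in> V \<and> v \<in> V \<and> s \<le> t \<and> r \<le> t \<and> E u v \<and>
            ((s = 0 \<and> r = 0) \<or> r = s + 1 \<or> s = r + 1)
    | (Some (u, s), None) \<Rightarrow> u \<in> V \<and> s = t
    | (None, Some (v, r)) \<Rightarrow> v \<in> V \<and> r = t
    | (None, None) \<Rightarrow> False)"

end

theory Submission
  imports Defs
begin

definition sw :: "'b \<Rightarrow> 'b \<Rightarrow> 'b \<Rightarrow> 'b" where
  "sw u v x = (if x = u then v else if x = v then u else x)"

lemma aut_in: "automorphism V E f \<Longrightarrow> x \<in> V \<Longrightarrow> f x \<in> V"
  unfolding automorphism_def bij_betw_def by auto
lemma aut_inj: "automorphism V E f \<Longrightarrow> x \<in> V \<Longrightarrow> y \<in> V \<Longrightarrow> f x = f y \<Longrightarrow> x = y"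
  unfolding automorphism_def bij_betw_def inj_on_def by auto
lemma aut_surj: "automorphism V E f \<Longrightarrow> y \<in> V \<Longrightarrow> \<exists>x\<in>V. f x = y"
  unfolding automorphism_def bij_betw_def by (metis imageE)
lemma aut_E: "automorphism V E f \<Longrightarrow> x \<in> V \<Longrightarrow> y \<in> V \<Longrightarrow> E (f x) (f y) = E x y"
  unfolding automorphism_def by auto

lemma twins_nadj: "graph V E \<Longrightarrow> twins V E u v \<Longrightarrow> \<not> E u v"
  unfolding graph_def twins_def open_nbhd_def by (metis (mono_tags, lifting) mem_Collect_eq)

lemma twins_E: "twins V E u v \<Longrightarrow> x \<in> V \<Longrightarrow> E u x = E v x"
  unfolding twins_def open_nbhd_def by (metis (mono_tags, lifting) mem_Collect_eq)

lemma swap_aut: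
  assumes g: "graph V E" and tw: "twins V E u v"
  shows "automorphism V E (sw u v)"
proof -
  have uv: "u \<in> V" "v \<in> V" using tw unfolding twins_def by auto
  have bij: "bij_betw (sw u v) V V"
    unfolding bij_betw_def inj_on_def sw_def using uv by auto
  have sym: "\<And>x y. E x y = E y x" using g unfolding graph_def by blast
  have n: "\<not> E u v" "\<not> E v u" using twins_nadj[OF g tw] sym by auto
  have irr: "\<And>x. \<not> E x x" using g unfolding graph_def by blast
  have tE: "\<And>x. x \<in> V \<Longrightarrow> E u x = E v x" using twins_E[OF tw] .
  have A: "\<And>a z. z \<in> V \<Longrightarrow> E (sw u v a) z = E a z"
  proof -
    fix a z assume z: "z \<in> V"
    have e: "E u z = E v z" using tE[OF z] .
    show "E (sw u v a) z = E a z"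
    proof (cases "a = u")
      case True then show ?thesis using e by (simp add: sw_def)
    next
      case False then show ?thesis using e by (simp add: sw_def)
    qed
  qed
  have B: "\<And>a z. z \<in> V \<Longrightarrow> E z (sw u v a) = E z a"
  proof -
    fix a z assume z: "z \<in> V"
    have "E z (sw u v a) = E (sw u v a) z" by (rule sym)
    also have "\<dots> = E a z" using A[OF z] .
    also have "\<dots> = E z a" by (rule sym)
    finally show "E z (sw u v a) = E z a" .
  qed
  have "\<forall>x\<in>V. \<forall>y\<in>V. E (sw u v x) (sw u v y) = E x y"
  proof (intro ballI)
    fix x y assume x: "x \<in> V" and y: "y \<in> V"
    have "sw u v y \<in> V" using uv y unfolding sw_def by auto
    then have "E (sw u v x) (sw u v y) = E x (sw u v y)" by (rule A)
    also have "\<dots> = E x y" using B[OF x] .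
    finally show "E (sw u v x) (sw u v y) = E x y" .
  qed
  with bij show ?thesis unfolding automorphism_def by (intro conjI)
qed

lemma det_cover:
  assumes g: "graph V E" and d: "determining_set V E D"
  shows "twin_cover V E D"
  unfolding twin_cover_def
proof (intro conjI allI impI)
  show "D \<subseteq> V" using d unfolding determining_set_def by blast
  fix u v assume h: "u \<noteq> v \<and> twins V E u v"
  show "u \<in> D \<or> v \<in> D"
  proof (rule ccontr)
    assume "\<not> (u \<in> D \<or> v \<in> D)"
    hence "\<forall>x\<in>D. sw u v x = x" unfolding sw_def by auto
    moreover have "automorphism V E (sw u v)" using swap_aut[OF g conjunct2[OF h]] .
    moreover have "u \<in> V" using h unfolding twins_def by auto
    ultimately have "sw u v u = u" using d unfolding determining_set_def by blast
    thus False using h unfolding sw_def by auto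
  qed
qed

primrec reach :: "'b set \<Rightarrow> ('b \<Rightarrow> 'b \<Rightarrow> bool) \<Rightarrow> 'b \<Rightarrow> nat \<Rightarrow> 'b set" where
  "reach V E x0 0 = {x0}"
| "reach V E x0 (Suc j) = reach V E x0 j \<union> {y\<in>V. \<exists>z\<in>reach V E x0 j. E z y}"

lemma reach_sub: "x0 \<in> V \<Longrightarrow> reach V E x0 j \<subseteq> V"
proof (induction j)
  case 0 then show ?case by simp
next
  case (Suc j) then show ?case by auto
qed

lemma reach_aut:
  assumes a: "automorphism V E f" and x0: "x0 \<in> V" "f x0 = x0"
  shows "y \<in> V \<Longrightarrow> (f y \<in> reach V E x0 j \<longleftrightarrow> y \<in> reach V E x0 j)"
proof (induction j arbitrary: y)
  case 0
  have "f y = x0 \<longleftrightarrow> y = x0"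
  proof
    assume "f y = x0" then have "f y = f x0" using x0(2) by simp
    then show "y = x0" using aut_inj[OF a 0 x0(1)] by simp
  next
    assume "y = x0" then show "f y = x0" using x0(2) by simp
  qed
  then show ?case unfolding reach.simps singleton_iff .
next
  case (Suc j)
  have RV: "reach V E x0 j \<subseteq> V" by (rule reach_sub[OF x0(1)])
  have fy: "f y \<in> V" using aut_in[OF a Suc.prems] .
  have "(\<exists>z\<in>reach V E x0 j. E z (f y)) \<longleftrightarrow> (\<exists>z\<in>reach V E x0 j. E z y)"
  proof
    assume "\<exists>z\<in>reach V E x0 j. E z (f y)"
    then obtain z where z: "z \<in> reach V E x0 j" "E z (f y)" by blast
    obtain z' where z': "z' \<in> V" "f z' = z" using aut_surj[OF a] z RV by blast
    have "z' \<in> reach V E x0 j" using Suc.IH[OF z'(1)] z z' by simp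
    moreover have "E z' y" using aut_E[OF a z'(1) Suc.prems] z z' by simp
    ultimately show "\<exists>z\<in>reach V E x0 j. E z y" by blast
  next
    assume "\<exists>z\<in>reach V E x0 j. E z y"
    then obtain z where z: "z \<in> reach V E x0 j" "E z y" by blast
    have zV: "z \<in> V" using z RV by blast
    have "f z \<in> reach V E x0 j" using Suc.IH[OF zV] z by simp
    moreover have "E (f z) (f y)" using aut_E[OF a zV Suc.prems] z by simp
    ultimately show "\<exists>z\<in>reach V E x0 j. E z (f y)" by blast
  qed
  moreover have "(f y \<in> reach V E x0 j) = (y \<in> reach V E x0 j)" using Suc.IH[OF Suc.prems] .
  ultimately show ?case using fy Suc.prems by simp
qed

lemma myc_E_simps[simp]:
  "myc_E V E t (Some (u, s)) (Some (v, r)) = (u \<in> V \<and> v \<in> V \<and> s \<le> t \<and> r \<le> t \<and> E u v \<and>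
            ((s = 0 \<and> r = 0) \<or> r = s + 1 \<or> s = r + 1))"
  "myc_E V E t (Some (u, s)) None = (u \<in> V \<and> s = t)"
  "myc_E V E t None (Some (u, s)) = (u \<in> V \<and> s = t)"
  "myc_E V E t None None = False"
  unfolding myc_E_def by auto

lemma myc_V_simps[simp]:
  "Some (v, s) \<in> myc_V V t \<longleftrightarrow> v \<in> V \<and> s \<le> t"
  "None \<in> myc_V V t"
  unfolding myc_V_def by auto

lemma myc_graph: assumes "graph V E" shows "graph (myc_V V t) (myc_E V E t)"
proof -
  have sym: "\<And>x y. E x y \<Longrightarrow> E y x" and irr: "\<And>x. \<not> E x x"
    using assms unfolding graph_def by blast+
  have fin: "finite (myc_V V t)"
  proof -
    have "myc_V V t = (\<lambda>p. Some p) ` (V \<times> {..t}) \<union> {None}" unfolding myc_V_def by auto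
    thus ?thesis using assms unfolding graph_def by simp
  qed
  have 1: "\<forall>x y. myc_E V E t x y \<longrightarrow> x \<in> myc_V V t \<and> y \<in> myc_V V t"
  proof (intro allI)
    fix x y show "myc_E V E t x y \<longrightarrow> x \<in> myc_V V t \<and> y \<in> myc_V V t"
      by (cases x; cases y) auto
  qed
  have 2: "\<forall>x y. myc_E V E t x y \<longrightarrow> myc_E V E t y x"
  proof (intro allI)
    fix x y show "myc_E V E t x y \<longrightarrow> myc_E V E t y x"
      using sym by (cases x; cases y) auto
  qed
  have 3: "\<forall>x. \<not> myc_E V E t x x"
  proof
    fix x show "\<not> myc_E V E t x x" using irr by (cases x) auto
  qed
  show ?thesis using fin 1 2 3 unfolding graph_def by blast
qed


lemma graph_sym: "graph V E \<Longrightarrow> E x y \<Longrightarrow> E y x"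
  unfolding graph_def by blast
lemma graph_V1: "graph V E \<Longrightarrow> E x y \<Longrightarrow> x \<in> V"
  unfolding graph_def by blast
lemma graph_V2: "graph V E \<Longrightarrow> E x y \<Longrightarrow> y \<in> V"
  unfolding graph_def by blast

definition RP :: "'a set \<Rightarrow> ('a \<Rightarrow> 'a \<Rightarrow> bool) \<Rightarrow> nat \<Rightarrow> nat \<Rightarrow> ('a \<times> nat) option \<Rightarrow> bool" where
  "RP V E t j x \<longleftrightarrow> x = None \<or> (\<exists>v s. x = Some (v, s) \<and> v \<in> V \<and> s \<le> t \<and> (s = t \<or> (\<exists>u. E v u) \<and> t \<le> s + j))"

lemma RP_simps[simp]:
  "RP V E t j None"
  "RP V E t j (Some (v, s)) \<longleftrightarrow> v \<in> V \<and> s \<le> t \<and> (s = t \<or> (\<exists>u. E v u) \<and> t \<le> s + j)"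
  unfolding RP_def by auto

lemma myc_reach:
  assumes g: "graph V E" and t1: "1 \<le> t"
  shows "x \<in> reach (myc_V V t) (myc_E V E t) None (Suc j) \<longleftrightarrow> RP V E t j x"
proof (induction j arbitrary: x)
  case 0
  show ?case
  proof (cases x)
    case None then show ?thesis by simp
  next
    case (Some p) then obtain v s where x: "x = Some (v, s)" by (cases p) auto
    show ?thesis unfolding x by auto
  qed
next
  case (Suc j)
  let ?R = "reach (myc_V V t) (myc_E V E t) None (Suc j)"
  have eq: "x \<in> reach (myc_V V t) (myc_E V E t) None (Suc (Suc j)) \<longleftrightarrow>
     x \<in> ?R \<or> (x \<in> myc_V V t \<and> (\<exists>z. RP V E t j z \<and> myc_E V E t z x))"
  proof -
    have "x \<in> reach (myc_V V t) (myc_E V E t) None (Suc (Suc j)) \<longleftrightarrow>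
      x \<in> ?R \<or> (x \<in> myc_V V t \<and> (\<exists>z\<in>?R. myc_E V E t z x))"
      by (simp only: reach.simps(2)[of _ _ _ "Suc j"] Un_iff mem_Collect_eq)
    moreover have "(\<exists>z\<in>?R. myc_E V E t z x) \<longleftrightarrow> (\<exists>z. RP V E t j z \<and> myc_E V E t z x)"
      using Suc.IH by blast
    ultimately show ?thesis by simp
  qed
  show ?case
  proof
    assume "x \<in> reach (myc_V V t) (myc_E V E t) None (Suc (Suc j))"
    then have "RP V E t j x \<or> (x \<in> myc_V V t \<and> (\<exists>z. RP V E t j z \<and> myc_E V E t z x))"
      using eq Suc.IH by blast
    then show "RP V E t (Suc j) x"
    proof
      assume "RP V E t j x" then show ?thesis unfolding RP_def by auto
    next
      assume "x \<in> myc_V V t \<and> (\<exists>z. RP V E t j z \<and> myc_E V E t z x)"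
      then obtain z where z: "RP V E t j z" "myc_E V E t z x" by blast
      show ?thesis
      proof (cases x)
        case None then show ?thesis by simp
      next
        case (Some p) then obtain v s where x: "x = Some (v, s)" by (cases p) auto
        show ?thesis
        proof (cases z)
          case None then show ?thesis using z x by auto
        next
          case (Some q) then obtain u r where zz: "z = Some (u, r)" by (cases q) auto
          have e: "E u v" "u \<in> V" "v \<in> V" "r \<le> t" "s \<le> t"
            and rs: "(r = 0 \<and> s = 0) \<or> s = r + 1 \<or> r = s + 1"
            using z(2) unfolding x zz by auto
          have ev: "E v u" using graph_sym[OF g e(1)] .
          have "r = t \<or> t \<le> r + j" using z(1) unfolding zz by auto
          then have "t \<le> s + Suc j" using rs e by auto
          then show ?thesis unfolding x using e ev by auto
        qed
      qed
    qed
  next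
    assume h: "RP V E t (Suc j) x"
    show "x \<in> reach (myc_V V t) (myc_E V E t) None (Suc (Suc j))"
    proof (cases "RP V E t j x")
      case True then show ?thesis using eq Suc.IH by blast
    next
      case False
      then obtain v s u where x: "x = Some (v, s)" and vs: "v \<in> V" "s \<le> t" "s \<noteq> t" "E v u"
        "t = s + Suc j"
        using h unfolding RP_def by auto
      have uV: "u \<in> V" using graph_V2[OF g vs(4)] .
      have eu: "E u v" using graph_sym[OF g vs(4)] .
      have "RP V E t j (Some (u, s + 1))" using uV vs eu by auto
      moreover have "myc_E V E t (Some (u, s + 1)) x" using x uV vs eu by auto
      moreover have "x \<in> myc_V V t" using x vs by simp
      ultimately show ?thesis using eq by blast
    qed
  qed
qed

lemma twins_lift:
  assumes tw: "twins V E u v" and s: "s \<le> t"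
  shows "twins (myc_V V t) (myc_E V E t) (Some (u, s)) (Some (v, s))"
proof -
  have uv: "u \<in> V" "v \<in> V" using tw unfolding twins_def by auto
  have "\<And>y. myc_E V E t (Some (u, s)) y = myc_E V E t (Some (v, s)) y"
  proof -
    fix y show "myc_E V E t (Some (u, s)) y = myc_E V E t (Some (v, s)) y"
    proof (cases y)
      case None then show ?thesis using uv by simp
    next
      case (Some p) then obtain x r where y: "y = Some (x, r)" by (cases p) auto
      show ?thesis
      proof (cases "x \<in> V")
        case True then show ?thesis unfolding y using uv twins_E[OF tw True] by simp
      next
        case False then show ?thesis unfolding y by simp
      qed
    qed
  qed
  then show ?thesis using uv s unfolding twins_def open_nbhd_def by simp
qed

lemma iso_twins: "isolated V E u \<Longrightarrow> isolated V E v \<Longrightarrow> twins V E u v"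
  unfolding isolated_def twins_def open_nbhd_def by auto

lemma twins_iso: "twins V E u v \<Longrightarrow> isolated V E u \<Longrightarrow> isolated V E v"
  unfolding isolated_def twins_def open_nbhd_def by blast

lemma twins_sym: "twins V E u v \<Longrightarrow> twins V E v u"
  unfolding twins_def by auto

lemma cover_remove:
  assumes c: "twin_cover V E X" and i: "isolated V E i"
    and all: "\<And>j. isolated V E j \<Longrightarrow> j \<noteq> i \<Longrightarrow> j \<in> X"
  shows "twin_cover V E (X - {i})"
  unfolding twin_cover_def
proof (intro conjI allI impI)
  show "X - {i} \<subseteq> V" using c unfolding twin_cover_def by blast
  fix u v assume h: "u \<noteq> v \<and> twins V E u v"
  have uv: "u \<in> X \<or> v \<in> X" using c h unfolding twin_cover_def by blast
  show "u \<in> X - {i} \<or> v \<in> X - {i}"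
  proof (cases "u = i")
    case True
    then have "isolated V E v" using twins_iso[of V E u v] h i by blast
    then have "v \<in> X" using all h True by blast
    then show ?thesis using h True by blast
  next
    case False
    show ?thesis
    proof (cases "v = i")
      case True
      then have "isolated V E u" using twins_iso[of V E v u] twins_sym[of V E u v] h i by blast
      then have "u \<in> X" using all h True by blast
      then show ?thesis using h True by blast
    next
      case False
      then show ?thesis using uv \<open>u \<noteq> i\<close> by blast
    qed
  qed
qed



lemma opt_cases: "(x = None \<Longrightarrow> P) \<Longrightarrow> (\<And>u r. x = Some (u, r) \<Longrightarrow> P) \<Longrightarrow> P"
  by (cases x) auto

locale MT =
  fixes V :: "'a set" and E :: "'a \<Rightarrow> 'a \<Rightarrow> bool" and t :: nat and S :: "'a set"
    and i0 :: 'a and a :: 'a and b :: 'a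
  assumes G: "graph V E" and t1: "1 \<le> t" and Sdet: "determining_set V E S"
    and Smin: "min_twin_cover V E S"
    and i0iso: "isolated V E i0" and i0S: "i0 \<notin> S"
    and isoS: "\<And>i. isolated V E i \<Longrightarrow> i \<noteq> i0 \<Longrightarrow> i \<in> S"
    and ab: "a \<in> V" "b \<in> V" "a \<noteq> b"
begin

abbreviation "Vm \<equiv> myc_V V t"
abbreviation "Em \<equiv> myc_E V E t"

definition T :: "('a \<times> nat) option set" where
  "T = Some ` (S \<times> {..t} \<union> {i0} \<times> {1..<t})"

lemma SV: "S \<subseteq> V" using Sdet unfolding determining_set_def by blast
lemma i0V: "i0 \<in> V" using i0iso unfolding isolated_def by blast
lemma i0E: "\<not> E i0 u"
  using i0iso graph_V2[OF G, of i0 u] unfolding isolated_def by blast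

lemma T_mem: "Some (v, s) \<in> T \<longleftrightarrow> (v \<in> S \<and> s \<le> t) \<or> (v = i0 \<and> 1 \<le> s \<and> s < t)"
  unfolding T_def by auto

lemma TV: "T \<subseteq> Vm"
  using SV i0V unfolding T_def by auto

lemma finV: "finite V" using G unfolding graph_def by blast

lemma T_card: "card T = (t + 1) * card S + (t - 1)"
proof -
  have fS: "finite S" using SV finV finite_subset by blast
  have "card T = card (S \<times> {..t} \<union> {i0} \<times> {1..<t})"
    unfolding T_def by (rule card_image) (simp add: inj_on_def)
  also have "\<dots> = card (S \<times> {..t}) + card ({i0} \<times> {1..<t})"
    by (rule card_Un_disjoint) (use fS i0S in auto)
  also have "\<dots> = (t + 1) * card S + (t - 1)"
    by (simp add: card_cartesian_product)
  finally show ?thesis .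
qed


lemma Esym: "E x y = E y x" using graph_sym[OF G] by blast
lemma iso_iff: "isolated V E v \<longleftrightarrow> v \<in> V \<and> \<not> (\<exists>u. E v u)"
  unfolding isolated_def using graph_V2[OF G] by blast

lemma T_det: "determining_set Vm Em T"
  unfolding determining_set_def
proof (intro conjI allI impI)
  show "T \<subseteq> Vm" by (rule TV)
  fix f assume h: "automorphism Vm Em f \<and> (\<forall>x\<in>T. f x = x)"
  then have a: "automorphism Vm Em f" and fT: "\<And>x. x \<in> T \<Longrightarrow> f x = x" by auto
  let ?p = "Some (i0, t)"
  have pV: "?p \<in> Vm" using i0V by simp
  have nb: "\<And>z. z \<in> Vm \<Longrightarrow> Em (f ?p) z \<Longrightarrow> z = f None"
  proof -
    fix z assume zV: "z \<in> Vm" and e: "Em (f ?p) z"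
    obtain z' where z': "z' \<in> Vm" "f z' = z" using aut_surj[OF a zV] by blast
    have "Em ?p z'" using aut_E[OF a pV z'(1)] e z' by simp
    then have "z' = None" using i0E by (cases z' rule: opt_cases) auto
    then show "z = f None" using z' by simp
  qed
  have pE: "Em ?p None" using i0V by simp
  have fpE: "Em (f ?p) (f None)" using aut_E[OF a pV, of None] pE by simp
  have fpV: "f ?p \<in> Vm" using aut_in[OF a pV] .
  have fN: "f None = None"
  proof (rule ccontr)
    assume nN: "f None \<noteq> None"
    then obtain u r where n: "f None = Some (u, r)" by (cases "f None" rule: opt_cases) auto
    show False
    proof (cases "f ?p" rule: opt_cases)
      case 1
      then have ur: "u \<in> V" "r = t" using fpE n by auto
      define c where "c = (if u = a then b else a)"
      have c: "c \<in> V" "c \<noteq> u" using ab unfolding c_def by auto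
      have "Em (f ?p) (Some (c, t))" using 1 c by simp
      then have "Some (c, t) = f None" using nb c by simp
      then show False using n c by simp
    next
      case (2 v s)
      have e: "v \<in> V" "u \<in> V" "s \<le> t" "r \<le> t" "E v u"
        and rs: "(s = 0 \<and> r = 0) \<or> r = s + 1 \<or> s = r + 1"
        using fpE n 2 by auto
      show False
      proof (cases "s = t")
        case True
        then have "Em (f ?p) None" using 2 e by simp
        then have "None = f None" using nb by simp
        then show False using nN by simp
      next
        case False
        then have st: "s < t" using e by simp
        have "Em (f ?p) (Some (u, s + 1))" using 2 e st by simp
        then have "Some (u, s + 1) = f None" using nb e st by simp
        then have r1: "r = s + 1" using n by simp
        show False
        proof (cases "s = 0")
          case True
          have "Em (f ?p) (Some (u, 0))" using 2 e True by simp
          then have "Some (u, 0) = f None" using nb e by simp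
          then show False using n r1 by simp
        next
          case False
          have "Em (f ?p) (Some (u, s - 1))" using 2 e False by simp
          then have "Some (u, s - 1) = f None" using nb e st by simp
          then show False using n r1 by simp
        qed
      qed
    qed
  qed
  have NV: "None \<in> Vm" by simp
  have rA: "\<And>x j. x \<in> Vm \<Longrightarrow> RP V E t j (f x) = RP V E t j x"
    using reach_aut[OF a NV fN] myc_reach[OF G t1] by blast
  have fnN: "\<And>x. x \<in> Vm \<Longrightarrow> x \<noteq> None \<Longrightarrow> f x \<noteq> None"
    using aut_inj[OF a _ NV] fN by metis
  have fSome: "\<And>x. x \<in> Vm \<Longrightarrow> x \<noteq> None \<Longrightarrow> \<exists>v' s'. f x = Some (v', s') \<and> v' \<in> V \<and> s' \<le> t"
  proof -
    fix x assume x: "x \<in> Vm" "x \<noteq> None"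
    have "f x \<in> Vm" using aut_in[OF a x(1)] .
    moreover have "f x \<noteq> None" using fnN x by blast
    ultimately show "\<exists>v' s'. f x = Some (v', s') \<and> v' \<in> V \<and> s' \<le> t"
      by (cases "f x" rule: opt_cases) auto
  qed
  have lev: "\<And>v s. v \<in> V \<Longrightarrow> (\<exists>u. E v u) \<Longrightarrow> s < t \<Longrightarrow> \<exists>v'. f (Some (v, s)) = Some (v', s) \<and> v' \<in> V"
  proof -
    fix v s assume v: "v \<in> V" "\<exists>u. E v u" and st: "s < t"
    have xV: "Some (v, s) \<in> Vm" using v st by simp
    obtain v' s' where fx: "f (Some (v, s)) = Some (v', s')" "v' \<in> V" "s' \<le> t"
      using fSome[OF xV] by blast
    have r1: "RP V E t (t - s) (Some (v, s))" using v st by simp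
    have r2: "\<not> RP V E t (t - s - 1) (Some (v, s))" using v st by simp
    have "RP V E t (t - s) (f (Some (v, s)))" using rA[OF xV, of "t - s"] r1 by blast
    then have q1: "s' = t \<or> (\<exists>u. E v' u) \<and> t \<le> s' + (t - s)" using fx by simp
    have "\<not> RP V E t (t - s - 1) (f (Some (v, s)))" using rA[OF xV, of "t - s - 1"] r2 by blast
    then have q2: "s' \<noteq> t \<and> (\<not> (\<exists>u. E v' u) \<or> \<not> t \<le> s' + (t - s - 1))" using fx by simp
    have q3: "t \<le> s' + (t - s)" "\<not> t \<le> s' + (t - s - 1)" using q1 q2 by blast+
    have "s' = s" using q3 st by linarith
    then show "\<exists>v'. f (Some (v, s)) = Some (v', s) \<and> v' \<in> V" using fx by blast
  qed
  have levt: "\<And>v. v \<in> V \<Longrightarrow> \<exists>v'. f (Some (v, t)) = Some (v', t) \<and> v' \<in> V"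
  proof -
    fix v assume v: "v \<in> V"
    have xV: "Some (v, t) \<in> Vm" using v by simp
    obtain v' s' where fx: "f (Some (v, t)) = Some (v', s')" "v' \<in> V" "s' \<le> t"
      using fSome[OF xV] by blast
    have r1: "RP V E t 0 (Some (v, t))" using v by simp
    have "RP V E t 0 (f (Some (v, t)))" using rA[OF xV, of 0] r1 by blast
    then have "s' = t \<or> (\<exists>u. E v' u) \<and> t \<le> s' + 0" using fx by simp
    then have "s' = t" using fx by auto
    then show "\<exists>v'. f (Some (v, t)) = Some (v', t) \<and> v' \<in> V" using fx by blast
  qed
  have levi: "\<And>v s. v \<in> V \<Longrightarrow> \<not> (\<exists>u. E v u) \<Longrightarrow> s < t \<Longrightarrow>
      \<exists>v' s'. f (Some (v, s)) = Some (v', s') \<and> v' \<in> V \<and> s' < t \<and> \<not> (\<exists>u. E v' u)"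
  proof -
    fix v s assume v: "v \<in> V" "\<not> (\<exists>u. E v u)" and st: "s < t"
    have xV: "Some (v, s) \<in> Vm" using v st by simp
    obtain v' s' where fx: "f (Some (v, s)) = Some (v', s')" "v' \<in> V" "s' \<le> t"
      using fSome[OF xV] by blast
    have r1: "\<not> RP V E t t (Some (v, s))" using v st by simp
    have "\<not> RP V E t t (f (Some (v, s)))" using rA[OF xV, of t] r1 by blast
    then have "\<not> RP V E t t (Some (v', s'))" using fx by simp
    then show "\<exists>v' s'. f (Some (v, s)) = Some (v', s') \<and> v' \<in> V \<and> s' < t \<and> \<not> (\<exists>u. E v' u)"
      using fx by auto
  qed
  have l0: "\<And>v. v \<in> V \<Longrightarrow> \<exists>v'\<in>V. f (Some (v, 0)) = Some (v', 0)"
  proof -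
    fix v assume v: "v \<in> V"
    show "\<exists>v'\<in>V. f (Some (v, 0)) = Some (v', 0)"
    proof (cases "\<exists>u. E v u")
      case True then show ?thesis using lev[OF v True] t1 by auto
    next
      case False
      show ?thesis
      proof (cases "v \<in> S")
        case True
        then have "f (Some (v, 0)) = Some (v, 0)" using fT T_mem by simp
        then show ?thesis using v by blast
      next
        case vS: False
        then have vi: "v = i0" using isoS iso_iff v False by blast
        obtain v' s' where fx: "f (Some (v, 0)) = Some (v', s')" "v' \<in> V" "s' < t"
          "\<not> (\<exists>u. E v' u)"
          using levi[OF v False, of 0] t1 by auto
        have "Some (v', s') = Some (v, 0)"
        proof (rule ccontr)
          assume ne: "Some (v', s') \<noteq> Some (v, 0)"
          have "Some (v', s') \<in> T"
          proof (cases "v' = i0")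
            case True then show ?thesis using ne vi fx T_mem by auto
          next
            case False then have "v' \<in> S" using isoS iso_iff fx by blast
            then show ?thesis using T_mem fx by auto
          qed
          then have "f (Some (v', s')) = f (Some (v, 0))" using fT fx by simp
          moreover have "Some (v', s') \<in> Vm" "Some (v, 0) \<in> Vm" using fx v by auto
          ultimately show False using aut_inj[OF a] ne by blast
        qed
        then show ?thesis using fx v by auto
      qed
    qed
  qed
  define \<sigma> where "\<sigma> v = fst (the (f (Some (v, 0))))" for v
  have \<sigma>: "\<And>v. v \<in> V \<Longrightarrow> f (Some (v, 0)) = Some (\<sigma> v, 0) \<and> \<sigma> v \<in> V"
  proof -
    fix v assume v: "v \<in> V"
    obtain v' where "v' \<in> V" "f (Some (v, 0)) = Some (v', 0)" using l0[OF v] by blast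
    then show "f (Some (v, 0)) = Some (\<sigma> v, 0) \<and> \<sigma> v \<in> V" unfolding \<sigma>_def by simp
  qed
  have inj: "inj_on \<sigma> V"
  proof (rule inj_onI)
    fix v w assume v: "v \<in> V" and w: "w \<in> V" and e: "\<sigma> v = \<sigma> w"
    have "f (Some (v, 0)) = f (Some (w, 0))" using \<sigma>[OF v] \<sigma>[OF w] e by simp
    moreover have "Some (v, 0) \<in> Vm" "Some (w, 0) \<in> Vm" using v w by auto
    ultimately have "Some (v, 0) = Some (w, (0::nat))" using aut_inj[OF a] by blast
    then show "v = w" by simp
  qed
  have img: "\<sigma> ` V \<subseteq> V" using \<sigma> by blast
  have "\<sigma> ` V = V" using endo_inj_surj[OF finV img inj] .
  then have bij: "bij_betw \<sigma> V V" using inj unfolding bij_betw_def by blast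
  have edges: "\<forall>x\<in>V. \<forall>y\<in>V. E (\<sigma> x) (\<sigma> y) = E x y"
  proof (intro ballI)
    fix x y assume x: "x \<in> V" and y: "y \<in> V"
    have xm: "Some (x, 0) \<in> Vm" "Some (y, 0) \<in> Vm" using x y by auto
    have "E (\<sigma> x) (\<sigma> y) = Em (Some (\<sigma> x, 0)) (Some (\<sigma> y, 0))" using \<sigma>[OF x] \<sigma>[OF y] by simp
    also have "\<dots> = Em (f (Some (x, 0))) (f (Some (y, 0)))" using \<sigma>[OF x] \<sigma>[OF y] by simp
    also have "\<dots> = Em (Some (x, 0)) (Some (y, 0))" using aut_E[OF a xm] .
    also have "\<dots> = E x y" using x y by simp
    finally show "E (\<sigma> x) (\<sigma> y) = E x y" .
  qed
  have a\<sigma>: "automorphism V E \<sigma>" unfolding automorphism_def using bij edges by blast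
  have \<sigma>S: "\<forall>x\<in>S. \<sigma> x = x"
  proof
    fix x assume x: "x \<in> S"
    then have "f (Some (x, 0)) = Some (x, 0)" using fT T_mem by simp
    then show "\<sigma> x = x" using \<sigma>[of x] x SV by auto
  qed
  have \<sigma>id: "\<forall>x\<in>V. \<sigma> x = x" using Sdet a\<sigma> \<sigma>S unfolding determining_set_def by blast
  have lev0: "\<forall>v\<in>V. f (Some (v, 0)) = Some (v, 0)" using \<sigma> \<sigma>id by simp
  have alll: "\<And>s. s \<le> t \<Longrightarrow> \<forall>v\<in>V. f (Some (v, s)) = Some (v, s)"
  proof -
    fix s show "s \<le> t \<Longrightarrow> \<forall>v\<in>V. f (Some (v, s)) = Some (v, s)"
    proof (induction s)
      case 0 then show ?case using lev0 by blast
    next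
      case (Suc s)
      have IH: "\<And>v. v \<in> V \<Longrightarrow> f (Some (v, s)) = Some (v, s)" using Suc by simp
      show ?case
      proof
        fix v assume v: "v \<in> V"
        have xm: "Some (v, Suc s) \<in> Vm" using v Suc.prems by simp
        show "f (Some (v, Suc s)) = Some (v, Suc s)"
        proof (cases "v \<in> S")
          case True then show ?thesis using fT T_mem Suc.prems by simp
        next
          case vS: False
          show ?thesis
          proof (cases "\<exists>u. E v u")
            case True
            have st: "Suc s < t \<or> Suc s = t" using Suc.prems by auto
            obtain v' where fx: "f (Some (v, Suc s)) = Some (v', Suc s)" "v' \<in> V"
              using st lev[OF v True] levt[OF v] by auto
            have nb: "\<And>x. x \<in> V \<Longrightarrow> E v x = E v' x"
            proof -
              fix x assume x: "x \<in> V"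
              have xs: "Some (x, s) \<in> Vm" using x Suc.prems by simp
              have "E v x = Em (Some (x, s)) (Some (v, Suc s))" using x v Suc.prems Esym[of v x] by simp
              also have "\<dots> = Em (f (Some (x, s))) (f (Some (v, Suc s)))" using aut_E[OF a xs xm] by simp
              also have "\<dots> = Em (Some (x, s)) (Some (v', Suc s))" using IH[OF x] fx by simp
              also have "\<dots> = E v' x" using x fx Suc.prems Esym[of v' x] by simp
              finally show "E v x = E v' x" .
            qed
            have tw: "twins V E v v'" unfolding twins_def open_nbhd_def using v fx nb by auto
            show ?thesis
            proof (rule ccontr)
              assume ne: "f (Some (v, Suc s)) \<noteq> Some (v, Suc s)"
              then have "v \<noteq> v'" using fx by auto
              then have "v' \<in> S" using Smin tw vS unfolding min_twin_cover_def twin_cover_def by blast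
              then have "f (Some (v', Suc s)) = Some (v', Suc s)" using fT T_mem Suc.prems by simp
              then have "f (Some (v', Suc s)) = f (Some (v, Suc s))" using fx by simp
              moreover have "Some (v', Suc s) \<in> Vm" using fx Suc.prems by simp
              ultimately have "Some (v', Suc s) = Some (v, Suc s)" using aut_inj[OF a _ xm] by blast
              then show False using ne fx by simp
            qed
          next
            case False
            then have vi: "v = i0" using isoS iso_iff v vS by blast
            show ?thesis
            proof (cases "Suc s < t")
              case True then show ?thesis using fT T_mem vi by simp
            next
              case False
              then have st: "Suc s = t" using Suc.prems by simp
              obtain v' where fx: "f (Some (v, t)) = Some (v', t)" "v' \<in> V" using levt[OF v] by blast
              show ?thesis
              proof (rule ccontr)
                assume ne: "f (Some (v, Suc s)) \<noteq> Some (v, Suc s)"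
                then have vv: "v' \<noteq> i0" using fx st vi by auto
                show False
                proof (cases "\<exists>u. E v' u")
                  case True
                  then obtain u where u: "E v' u" by blast
                  have uV: "u \<in> V" using graph_V2[OF G u] .
                  have us: "Some (u, s) \<in> Vm" using uV st by simp
                  have tm: "Some (v, t) \<in> Vm" using v by simp
                  have "Em (Some (v', t)) (Some (u, s))" using u uV fx st by auto
                  then have "Em (f (Some (v, t))) (f (Some (u, s)))" using fx IH[OF uV] st by simp
                  then have "Em (Some (v, t)) (Some (u, s))" unfolding aut_E[OF a tm us] .
                  then have "E i0 u" using vi by simp
                  then show False using i0E by blast
                next
                  case False
                  then have "v' \<in> S" using isoS iso_iff fx vv by blast
                  then have "f (Some (v', t)) = Some (v', t)" using fT T_mem by simp
                  then have "f (Some (v', t)) = f (Some (v, t))" using fx by simp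
                  moreover have "Some (v', t) \<in> Vm" "Some (v, t) \<in> Vm" using fx v by auto
                  ultimately have "Some (v', t) = Some (v, t)" using aut_inj[OF a] by blast
                  then show False using vv vi by simp
                qed
              qed
            qed
          qed
        qed
      qed
    qed
  qed
  show "\<forall>x\<in>Vm. f x = x"
  proof
    fix x assume x: "x \<in> Vm"
    show "f x = x"
    proof (cases x rule: opt_cases)
      case 1 then show ?thesis using fN by simp
    next
      case (2 v s) then show ?thesis using alll x by simp
    qed
  qed
qed


lemma S_le: "twin_cover V E X \<Longrightarrow> card S \<le> card X"
  using Smin unfolding min_twin_cover_def by blast

lemma finVm: "finite Vm" using myc_graph[OF G] unfolding graph_def by blast

lemma lower:
  assumes D: "determining_set Vm Em D"
  shows "(t + 1) * card S + (t - 1) \<le> card D"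
proof -
  have cD: "twin_cover Vm Em D" using det_cover[OF myc_graph[OF G] D] .
  have cD': "\<And>x y. x \<noteq> y \<Longrightarrow> twins Vm Em x y \<Longrightarrow> x \<in> D \<or> y \<in> D"
    using cD unfolding twin_cover_def by blast
  have DV: "D \<subseteq> Vm" using D unfolding determining_set_def by blast
  have fD: "finite D" using finite_subset[OF DV finVm] .
  define Ds where "Ds s = {v \<in> V. Some (v, s) \<in> D}" for s
  have fDs: "\<And>s. finite (Ds s)" unfolding Ds_def using finV by simp
  have cov: "\<And>s. s \<le> t \<Longrightarrow> twin_cover V E (Ds s)"
  proof -
    fix s assume st: "s \<le> t"
    show "twin_cover V E (Ds s)" unfolding twin_cover_def
    proof (intro conjI allI impI)
      show "Ds s \<subseteq> V" unfolding Ds_def by blast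
      fix u v assume h: "u \<noteq> v \<and> twins V E u v"
      have tw: "twins Vm Em (Some (u, s)) (Some (v, s))" using twins_lift[OF conjunct2[OF h] st] .
      have "Some (u, s) \<noteq> Some (v, s)" using h by simp
      then have "Some (u, s) \<in> D \<or> Some (v, s) \<in> D" using cD' tw by simp
      moreover have "u \<in> V" "v \<in> V" using h unfolding twins_def by auto
      ultimately show "u \<in> Ds s \<or> v \<in> Ds s" unfolding Ds_def by blast
    qed
  qed
  have c1: "\<And>s. s \<le> t \<Longrightarrow> card S \<le> card (Ds s)" by (rule S_le[OF cov])
  have c2: "\<And>s. s \<le> t \<Longrightarrow> (\<forall>i. isolated V E i \<longrightarrow> i \<in> Ds s) \<Longrightarrow> card S + 1 \<le> card (Ds s)"
  proof -
    fix s assume st: "s \<le> t" and g: "\<forall>i. isolated V E i \<longrightarrow> i \<in> Ds s"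
    have "twin_cover V E (Ds s - {i0})"
    proof (rule cover_remove[OF cov[OF st] i0iso])
      fix j assume "isolated V E j" then show "j \<in> Ds s" using g by simp
    qed
    then have "card S \<le> card (Ds s - {i0})" by (rule S_le)
    moreover have "i0 \<in> Ds s" using g i0iso by blast
    ultimately show "card S + 1 \<le> card (Ds s)" using fDs[of s] card_Diff1_less[of "Ds s" i0] by simp
  qed
  have isoE: "\<And>i s y. isolated V E i \<Longrightarrow> s < t \<Longrightarrow> \<not> Em (Some (i, s)) y"
  proof -
    fix i s y assume i: "isolated V E i" and st: "s < t"
    show "\<not> Em (Some (i, s)) y" using i st iso_iff by (cases y rule: opt_cases) auto
  qed
  have onebad: "\<exists>s0<t. \<forall>s<t. s \<noteq> s0 \<longrightarrow> (\<forall>i. isolated V E i \<longrightarrow> i \<in> Ds s)"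
  proof (cases "\<forall>s<t. \<forall>i. isolated V E i \<longrightarrow> i \<in> Ds s")
    case True then show ?thesis using t1 by (intro exI[of _ 0]) auto
  next
    case False
    then obtain s1 i1 where s1: "s1 < t" "isolated V E i1" "i1 \<notin> Ds s1" by blast
    show ?thesis
    proof (rule exI[of _ s1], intro conjI allI impI)
      show "s1 < t" by (rule s1(1))
      fix s i assume s: "s < t" "s \<noteq> s1" and i: "isolated V E i"
      show "i \<in> Ds s"
      proof (rule ccontr)
        assume ni: "i \<notin> Ds s"
        have iV: "i \<in> V" "i1 \<in> V" using i s1 unfolding isolated_def by auto
        have "twins Vm Em (Some (i1, s1)) (Some (i, s))"
          unfolding twins_def open_nbhd_def using isoE[OF i s(1)] isoE[OF s1(2) s1(1)] iV s s1 by auto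
        moreover have "Some (i1, s1) \<noteq> Some (i, s)" using s by auto
        ultimately have "Some (i1, s1) \<in> D \<or> Some (i, s) \<in> D" using cD' by simp
        then show False using ni s1 iV unfolding Ds_def by auto
      qed
    qed
  qed
  then obtain s0 where s0: "s0 < t" and good: "\<And>s. s < t \<Longrightarrow> s \<noteq> s0 \<Longrightarrow> \<forall>i. isolated V E i \<longrightarrow> i \<in> Ds s"
    by blast
  have sumD: "(\<Sum>s\<in>{..t}. card (Ds s)) \<le> card D"
  proof -
    have "card (Sigma {..t} Ds) = (\<Sum>s\<in>{..t}. card (Ds s))"
      using fDs by (simp add: card_SigmaI)
    moreover have "card (Sigma {..t} Ds) \<le> card D"
    proof (rule card_inj_on_le[of "\<lambda>(s, v). Some (v, s)"])
      show "inj_on (\<lambda>(s, v). Some (v, s)) (Sigma {..t} Ds)" by (auto simp: inj_on_def)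
      show "(\<lambda>(s, v). Some (v, s)) ` Sigma {..t} Ds \<subseteq> D" unfolding Ds_def by auto
      show "finite D" by (rule fD)
    qed
    ultimately show ?thesis by simp
  qed
  have "(\<Sum>s\<in>{..t}. card (Ds s)) = card (Ds t) + (\<Sum>s\<in>{..<t}. card (Ds s))"
    by (simp add: lessThan_Suc_atMost[symmetric])
  also have "(\<Sum>s\<in>{..<t}. card (Ds s)) = card (Ds s0) + (\<Sum>s\<in>{..<t} - {s0}. card (Ds s))"
    using s0 by (simp add: sum.remove)
  finally have eq: "(\<Sum>s\<in>{..t}. card (Ds s)) = card (Ds t) + card (Ds s0) + (\<Sum>s\<in>{..<t} - {s0}. card (Ds s))"
    by simp
  have "(\<Sum>s\<in>{..<t} - {s0}. card S + 1) \<le> (\<Sum>s\<in>{..<t} - {s0}. card (Ds s))"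
    by (rule sum_mono) (use c2 good in auto)
  moreover have "(\<Sum>s\<in>{..<t} - {s0}. card S + 1) = (t - 1) * (card S + 1)"
    using s0 by simp
  ultimately have "(t - 1) * (card S + 1) \<le> (\<Sum>s\<in>{..<t} - {s0}. card (Ds s))" by simp
  moreover have "card S \<le> card (Ds t)" "card S \<le> card (Ds s0)" using c1 s0 by auto
  ultimately have "(t - 1) * (card S + 1) + card S + card S \<le> (\<Sum>s\<in>{..t}. card (Ds s))"
    using eq by linarith
  moreover have "(t - 1) * (card S + 1) + card S + card S = (t + 1) * card S + (t - 1)"
  proof -
    obtain k where "t = Suc k" using t1 by (cases t) auto
    then show ?thesis by (simp add: algebra_simps)
  qed
  ultimately show ?thesis using sumD by linarith
qed

lemma res: "det_num Vm Em = (t + 1) * card S + (t - 1)"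
proof -
  have fin: "finite {card D | D. determining_set Vm Em D}"
  proof (rule finite_subset)
    show "{card D | D. determining_set Vm Em D} \<subseteq> card ` Pow Vm"
      unfolding determining_set_def by auto
    show "finite (card ` Pow Vm)" using finVm by simp
  qed
  show ?thesis unfolding det_num_def
  proof (rule Min_eqI[OF fin])
    show "\<And>y. y \<in> {card D | D. determining_set Vm Em D} \<Longrightarrow> (t + 1) * card S + (t - 1) \<le> y"
    proof -
      fix y assume "y \<in> {card D | D. determining_set Vm Em D}"
      then obtain D where "y = card D" "determining_set Vm Em D" by blast
      then show "(t + 1) * card S + (t - 1) \<le> y" using lower by simp
    qed
    show "(t + 1) * card S + (t - 1) \<in> {card D | D. determining_set Vm Em D}"
      using T_det T_card by (intro CollectI exI[of _ T]) simp
  qed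
qed

lemma resG: "det_num V E = card S"
proof -
  have fin: "finite {card D | D. determining_set V E D}"
  proof (rule finite_subset)
    show "{card D | D. determining_set V E D} \<subseteq> card ` Pow V"
      unfolding determining_set_def by auto
    show "finite (card ` Pow V)" using finV by simp
  qed
  show ?thesis unfolding det_num_def
  proof (rule Min_eqI[OF fin])
    show "\<And>y. y \<in> {card D | D. determining_set V E D} \<Longrightarrow> card S \<le> y"
    proof -
      fix y assume "y \<in> {card D | D. determining_set V E D}"
      then obtain D where "y = card D" "determining_set V E D" by blast
      then show "card S \<le> y" using S_le[OF det_cover[OF G]] by simp
    qed
    show "card S \<in> {card D | D. determining_set V E D}"
      using Sdet by (intro CollectI exI[of _ S]) simp
  qed
qed

end

theorem mainTheorem7:
  fixes V :: "'a set" and E :: "'a \<Rightarrow> 'a \<Rightarrow> bool" and t :: nat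
  assumes "graph V E"
    and "\<exists>v. isolated V E v"
    and "has_distinct_twins V E"
    and "\<exists>S. min_twin_cover V E S \<and> determining_set V E S"
    and "t \<ge> 1"
  shows "det_num (myc_V V t) (myc_E V E t) = (t + 1) * det_num V E + t - 1"
proof -
  note G = assms(1)
  obtain S where Sm: "min_twin_cover V E S" and Sd: "determining_set V E S" using assms(4) by blast
  obtain a b where ab: "a \<noteq> b" "twins V E a b" using assms(3) unfolding has_distinct_twins_def by blast
  have abV: "a \<in> V" "b \<in> V" using ab(2) unfolding twins_def by auto
  obtain v where v: "isolated V E v" using assms(2) by blast
  have Sc: "twin_cover V E S" using Sm unfolding min_twin_cover_def by blast
  have SV: "S \<subseteq> V" using Sc unfolding twin_cover_def by blast
  have fS: "finite S" using finite_subset[OF SV] G unfolding graph_def by blast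
  have "\<exists>i0. isolated V E i0 \<and> i0 \<notin> S"
  proof (rule ccontr)
    assume "\<not> (\<exists>i0. isolated V E i0 \<and> i0 \<notin> S)"
    then have allS: "\<And>j. isolated V E j \<Longrightarrow> j \<in> S" by blast
    have "twin_cover V E (S - {v})"
    proof (rule cover_remove[OF Sc v])
      fix j assume "isolated V E j" then show "j \<in> S" by (rule allS)
    qed
    then have "card S \<le> card (S - {v})" using Sm unfolding min_twin_cover_def by blast
    moreover have "card (S - {v}) < card S" using card_Diff1_less[OF fS allS[OF v]] .
    ultimately show False by simp
  qed
  then obtain i0 where i0: "isolated V E i0" "i0 \<notin> S" by blast
  have isoS: "\<And>i. isolated V E i \<Longrightarrow> i \<noteq> i0 \<Longrightarrow> i \<in> S"
  proof -
    fix i assume i: "isolated V E i" "i \<noteq> i0"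
    have "twins V E i i0" using iso_twins[OF i(1) i0(1)] .
    then have "i \<in> S \<or> i0 \<in> S" using Sc i(2) unfolding twin_cover_def by blast
    then show "i \<in> S" using i0(2) by blast
  qed
  interpret MT V E t S i0 a b
    using G assms(5) Sd Sm i0 isoS abV ab(1) by unfold_locales auto
  have "det_num (myc_V V t) (myc_E V E t) = (t + 1) * card S + (t - 1)" by (rule res)
  also have "\<dots> = (t + 1) * det_num V E + t - 1" using resG assms(5) by simp
  finally show ?thesis .
qed

end
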